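(* Let $(X,d)$ be a proper metric space, $f:X\to X$ continuous, $x_0\in X$ and $1\le p<\infty$. Then the push-forward $f_*\mu=\mu\circ f^{-1}$ maps $\mathcal P_p(X)$ into itself and is continuous with respect to $w_p$ if and only if \[ \sup_{x\in X}\frac{d(f(x),x_0)}{1+d(x,x_0)}<\infty. \]
   Context: A metric space is proper if closed bounded sets are compact. $\mathcal P_p(X)$ is the set of Borel probability measures with finite $p$-th moment $\int d(x,x_0)^p\,d\mu<\infty$. It carries the $L^p$-Wasserstein distance \[ w_p(\mu,\nu)=\Big(\inf_{\pi\in\Pi(\mu,\nu)}\int d(x,y)^p\,d\pi\Big)^{1/p}. \] *)

theory Defs
  imports "HOL-Probability.Probability"
begin

definition proper_space :: "'a::metric_space itself \<Rightarrow> bool" where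
  "proper_space _ \<longleftrightarrow> (\<forall>S::'a set. closed S \<and> bounded S \<longrightarrow> compact S)"

definition Pp :: "real \<Rightarrow> 'a::metric_space \<Rightarrow> 'a measure set" where
  "Pp p x0 = {\<mu>. sets \<mu> = sets borel \<and> prob_space \<mu> \<and>
      (\<integral>\<^sup>+ x. ennreal (dist x x0 powr p) \<partial>\<mu>) < \<infinity>}"

definition couplings :: "'a::metric_space measure \<Rightarrow> 'a measure \<Rightarrow> ('a \<times> 'a) measure set" where
  "couplings \<mu> \<nu> = {\<pi>. sets \<pi> = sets borel \<and> prob_space \<pi> \<and>
      distr \<pi> borel fst = \<mu> \<and> distr \<pi> borel snd = \<nu>}"

definition wasserstein :: "real \<Rightarrow> 'a::metric_space measure \<Rightarrow> 'a measure \<Rightarrow> real" where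
  "wasserstein p \<mu> \<nu> =
     (enn2real (INF \<pi>\<in>couplings \<mu> \<nu>. \<integral>\<^sup>+ z. ennreal (dist (fst z) (snd z) powr p) \<partial>\<pi>)) powr (1 / p)"

end

theory Submission
  imports Defs
begin


lemma proper_compact_cball:
  assumes "proper_space TYPE('a::metric_space)"
  shows "compact (cball (z::'a) r)"
  using assms unfolding proper_space_def by auto

lemma proper_open_prod:
  assumes P: "proper_space TYPE('a::metric_space)" and U: "open (U::('a\<times>'a) set)"
  shows "\<exists>F. countable F \<and> (\<forall>R\<in>F. \<exists>A B. open A \<and> open B \<and> R = A \<times> B) \<and> U = \<Union>F"
proof -
  obtain z :: 'a where True by simp
  have "\<forall>n k. \<exists>N. finite N \<and> cball z (real n) \<subseteq> (\<Union>x\<in>N. ball x (1/Suc k))"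
  proof (intro allI)
    fix n k
    have "compact (cball z (real n))" using proper_compact_cball[OF P] .
    then have "seq_compact (cball z (real n))" by (simp add: compact_imp_seq_compact)
    from seq_compact_imp_totally_bounded[OF this, rule_format, of "1/Suc k"]
    show "\<exists>N. finite N \<and> cball z (real n) \<subseteq> (\<Union>x\<in>N. ball x (1/Suc k))" by auto
  qed
  then obtain N where N: "\<And>n k. finite (N n k)" "\<And>n k. cball z (real n) \<subseteq> (\<Union>x\<in>N n k. ball x (1/Suc k))"
    by metis
  define R where "R = (\<lambda>(k::nat,a::'a,b::'a). ball a (1/Suc k) \<times> ball b (1/Suc k))"
  define G where "G = (\<Union>n k. {k} \<times> (N n k \<times> N n k))"
  have cG: "countable G" unfolding G_def
    by (intro countable_UN countable_SIGMA) (auto intro: countable_finite N)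
  define F where "F = R ` {t\<in>G. R t \<subseteq> U}"
  have "countable F" unfolding F_def using cG by auto
  moreover have "\<forall>S\<in>F. \<exists>A B. open A \<and> open B \<and> S = A \<times> B"
    unfolding F_def R_def by auto
  moreover have "U = \<Union>F"
  proof
    show "\<Union>F \<subseteq> U" unfolding F_def by auto
  next
    show "U \<subseteq> \<Union>F"
    proof
      fix w assume "w \<in> U"
      then obtain x y where w: "w = (x,y)" by (cases w)
      from open_prod_elim[OF U \<open>w\<in>U\<close>] obtain A B where AB: "open A" "open B" "w \<in> A \<times> B" "A \<times> B \<subseteq> U" .
      obtain e1 where e1: "e1 > 0" "ball x e1 \<subseteq> A" using AB w by (meson SigmaE2 openE)
      obtain e2 where e2: "e2 > 0" "ball y e2 \<subseteq> B" using AB w by (meson SigmaE2 openE)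
      define e where "e = min e1 e2"
      have "e > 0" using e1 e2 e_def by auto
      obtain k :: nat where k: "2 / Suc k < e"
      proof -
        obtain k :: nat where "2/e < k" using reals_Archimedean2 by blast
        then have "2 / Suc k < e" using \<open>e>0\<close> by (simp add: field_simps)
        then show ?thesis using that by blast
      qed
      obtain n :: nat where n: "max (dist z x) (dist z y) \<le> n" using real_nat_ceiling_ge by blast
      obtain a where a: "a \<in> N n k" "x \<in> ball a (1/Suc k)" using N(2)[of n k] n by (force simp: subset_eq)
      obtain b where b: "b \<in> N n k" "y \<in> ball b (1/Suc k)" using N(2)[of n k] n by (force simp: subset_eq)
      have "ball a (1/Suc k) \<subseteq> A"
      proof
        fix u assume "u \<in> ball a (1/Suc k)"
        then have "dist x u < 2/Suc k" using a(2) dist_triangle2[of x u a] by (simp add: dist_commute)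
        then show "u \<in> A" using k e1 e_def by (auto simp: subset_eq)
      qed
      moreover have "ball b (1/Suc k) \<subseteq> B"
      proof
        fix u assume "u \<in> ball b (1/Suc k)"
        then have "dist y u < 2/Suc k" using b(2) dist_triangle2[of y u b] by (simp add: dist_commute)
        then show "u \<in> B" using k e2 e_def by (auto simp: subset_eq)
      qed
      ultimately have "R (k,a,b) \<subseteq> U" unfolding R_def using AB by blast
      moreover have "(k,a,b) \<in> G" unfolding G_def using a b by blast
      moreover have "w \<in> R (k,a,b)" unfolding R_def using a b w by auto
      ultimately show "w \<in> \<Union>F" unfolding F_def by blast
    qed
  qed
  ultimately show ?thesis by blast
qed

lemma proper_sets_borel_prod:
  assumes P: "proper_space TYPE('a::metric_space)"
  shows "sets (borel::('a\<times>'a) measure) = sets (borel \<Otimes>\<^sub>M borel)"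
proof
  show "sets (borel \<Otimes>\<^sub>M borel) \<subseteq> sets (borel::('a\<times>'a) measure)"
  proof (rule sets_pair_in_sets)
    fix a b :: "'a set" assume "a \<in> sets borel" "b \<in> sets borel"
    have m1: "(fst::'a\<times>'a\<Rightarrow>'a) \<in> borel_measurable borel"
      by (intro borel_measurable_continuous_onI continuous_intros)
    have m2: "(snd::'a\<times>'a\<Rightarrow>'a) \<in> borel_measurable borel"
      by (intro borel_measurable_continuous_onI continuous_intros)
    have "fst -` a \<inter> snd -` b \<in> sets (borel::('a\<times>'a) measure)"
      using measurable_sets_borel[OF m1 \<open>a \<in> sets borel\<close>] measurable_sets_borel[OF m2 \<open>b \<in> sets borel\<close>]
      by auto
    moreover have "fst -` a \<inter> snd -` b = a \<times> b" by auto
    ultimately show "a \<times> b \<in> sets borel" by simp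
  qed
next
  show "sets (borel::('a\<times>'a) measure) \<subseteq> sets (borel \<Otimes>\<^sub>M borel)"
    unfolding sets_borel
  proof (rule sets.sigma_sets_subset')
    show "{S::('a\<times>'a) set. open S} \<subseteq> sets (borel \<Otimes>\<^sub>M borel)"
    proof
      fix U :: "('a\<times>'a) set" assume "U \<in> {S. open S}"
      then obtain F where F: "countable F" "\<forall>R\<in>F. \<exists>A B. open A \<and> open B \<and> R = A \<times> B" "U = \<Union>F"
        using proper_open_prod[OF P] by blast
      have "F \<subseteq> sets (borel \<Otimes>\<^sub>M borel)" using F(2) by auto
      then show "U \<in> sets (borel \<Otimes>\<^sub>M borel)" using F(1,3) by (auto intro: sets.countable_Union)
    qed
  qed (metis sets.top space_borel space_pair_measure UNIV_Times_UNIV)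
qed



lemma powr_add_le2:
  fixes a b p :: real
  assumes "0 \<le> a" "0 \<le> b" "0 < p"
  shows "(a + b) powr p \<le> 2 powr p * (a powr p + b powr p)"
proof -
  have "(a + b) powr p \<le> (2 * max a b) powr p"
    using assms by (intro powr_mono2) auto
  also have "\<dots> = 2 powr p * max a b powr p"
    using assms by (simp add: powr_mult)
  also have "max a b powr p \<le> a powr p + b powr p"
    by (cases "a \<le> b") (auto simp: max_def)
  then have "2 powr p * max a b powr p \<le> 2 powr p * (a powr p + b powr p)"
    by (intro mult_left_mono) auto
  finally show ?thesis .
qed

lemma coupling_fst:
  assumes "\<pi> \<in> couplings \<mu> \<nu>" "g \<in> borel_measurable borel"
  shows "(\<integral>\<^sup>+ z. g (fst z) \<partial>\<pi>) = (\<integral>\<^sup>+ x. g x \<partial>\<mu>)"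
proof -
  have s: "sets \<pi> = sets borel" and d: "distr \<pi> borel fst = \<mu>" using assms unfolding couplings_def by auto
  have m: "fst \<in> measurable \<pi> borel" using s
    by (simp add: measurable_cong_sets[OF s refl] borel_measurable_continuous_onI continuous_intros)
  have "(\<integral>\<^sup>+ x. g x \<partial>\<mu>) = (\<integral>\<^sup>+ x. g x \<partial>distr \<pi> borel fst)" using d by simp
  also have "\<dots> = (\<integral>\<^sup>+ z. g (fst z) \<partial>\<pi>)"
    using assms(2) by (intro nn_integral_distr m) simp
  finally show ?thesis by simp
qed

lemma coupling_snd:
  assumes "\<pi> \<in> couplings \<mu> \<nu>" "g \<in> borel_measurable borel"
  shows "(\<integral>\<^sup>+ z. g (snd z) \<partial>\<pi>) = (\<integral>\<^sup>+ x. g x \<partial>\<nu>)"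
proof -
  have s: "sets \<pi> = sets borel" and d: "distr \<pi> borel snd = \<nu>" using assms unfolding couplings_def by auto
  have m: "snd \<in> measurable \<pi> borel" using s
    by (simp add: measurable_cong_sets[OF s refl] borel_measurable_continuous_onI continuous_intros)
  have "(\<integral>\<^sup>+ x. g x \<partial>\<nu>) = (\<integral>\<^sup>+ x. g x \<partial>distr \<pi> borel snd)" using d by simp
  also have "\<dots> = (\<integral>\<^sup>+ z. g (snd z) \<partial>\<pi>)"
    using assms(2) by (intro nn_integral_distr m) simp
  finally show ?thesis by simp
qed

lemma coupling_cost_finite:
  assumes "\<mu> \<in> Pp p x0" "\<nu> \<in> Pp p x0" "\<pi> \<in> couplings \<mu> \<nu>" "0 < p"
  shows "(\<integral>\<^sup>+ z. ennreal (dist (fst z) (snd z) powr p) \<partial>\<pi>) < \<infinity>"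
proof -
  have s: "sets \<pi> = sets borel" using assms unfolding couplings_def by auto
  have [measurable]: "(\<lambda>x. dist x x0) \<in> borel_measurable borel"
    by (intro borel_measurable_continuous_onI continuous_intros)
  have mm: "(\<lambda>x. ennreal (dist x x0 powr p)) \<in> borel_measurable borel" by measurable
  have "(\<integral>\<^sup>+ z. ennreal (dist (fst z) (snd z) powr p) \<partial>\<pi>) \<le>
        (\<integral>\<^sup>+ z. ennreal (2 powr p) * (ennreal (dist (fst z) x0 powr p) + ennreal (dist (snd z) x0 powr p)) \<partial>\<pi>)"
  proof (intro nn_integral_mono)
    fix z :: "'a \<times> 'a"
    have "dist (fst z) (snd z) powr p \<le> (dist (fst z) x0 + dist (snd z) x0) powr p"
      using assms(4) dist_triangle3[of "fst z" "snd z" x0] by (intro powr_mono2) (auto simp: dist_commute)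
    also have "\<dots> \<le> 2 powr p * (dist (fst z) x0 powr p + dist (snd z) x0 powr p)"
      using assms(4) by (intro powr_add_le2) auto
    finally show "ennreal (dist (fst z) (snd z) powr p) \<le> ennreal (2 powr p) * (ennreal (dist (fst z) x0 powr p) + ennreal (dist (snd z) x0 powr p))"
      by (simp add: ennreal_mult[symmetric] ennreal_plus[symmetric] del: ennreal_plus)
  qed
  also have "\<dots> = ennreal (2 powr p) * ((\<integral>\<^sup>+ z. ennreal (dist (fst z) x0 powr p) \<partial>\<pi>) + (\<integral>\<^sup>+ z. ennreal (dist (snd z) x0 powr p) \<partial>\<pi>))"
  proof -
    have mf: "(\<lambda>z::'a\<times>'a. ennreal (dist (fst z) x0 powr p)) \<in> borel_measurable \<pi>"
      unfolding measurable_cong_sets[OF s refl] by (intro measurable_compose[OF _ mm] borel_measurable_continuous_onI continuous_intros)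
    have ms: "(\<lambda>z::'a\<times>'a. ennreal (dist (snd z) x0 powr p)) \<in> borel_measurable \<pi>"
      unfolding measurable_cong_sets[OF s refl] by (intro measurable_compose[OF _ mm] borel_measurable_continuous_onI continuous_intros)
    show ?thesis using mf ms by (subst nn_integral_cmult) (auto simp: nn_integral_add)
  qed
  also have "\<dots> = ennreal (2 powr p) * ((\<integral>\<^sup>+ x. ennreal (dist x x0 powr p) \<partial>\<mu>) + (\<integral>\<^sup>+ x. ennreal (dist x x0 powr p) \<partial>\<nu>))"
    using coupling_fst[OF assms(3) mm] coupling_snd[OF assms(3) mm] by simp
  also have "\<dots> < \<infinity>" using assms(1,2) unfolding Pp_def by (simp add: ennreal_mult_less_top)
  finally show ?thesis .
qed

lemma coupling_exists:
  assumes P: "proper_space TYPE('a::metric_space)" and "\<mu> \<in> Pp p (x0::'a)" "\<nu> \<in> Pp p x0"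
  shows "\<mu> \<Otimes>\<^sub>M \<nu> \<in> couplings \<mu> \<nu>"
proof -
  have sm: "sets \<mu> = sets borel" and pm: "prob_space \<mu>" and sn: "sets \<nu> = sets borel" and pn: "prob_space \<nu>"
    using assms unfolding Pp_def by auto
  interpret M: prob_space \<mu> by fact
  interpret N: prob_space \<nu> by fact
  interpret MN: pair_prob_space \<mu> \<nu> ..
  have "sets (\<mu> \<Otimes>\<^sub>M \<nu>) = sets (borel \<Otimes>\<^sub>M borel)" using sm sn by (rule sets_pair_measure_cong)
  also have "\<dots> = sets borel" using proper_sets_borel_prod[OF P] by simp
  finally have s: "sets (\<mu> \<Otimes>\<^sub>M \<nu>) = sets borel" .
  have "distr (\<mu> \<Otimes>\<^sub>M \<nu>) borel fst = distr (\<mu> \<Otimes>\<^sub>M \<nu>) \<mu> fst"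
    using sm by (intro distr_cong) auto
  also have "\<dots> = \<mu>" by (rule N.distr_pair_fst)
  finally have d1: "distr (\<mu> \<Otimes>\<^sub>M \<nu>) borel fst = \<mu>" .
  have "distr (\<mu> \<Otimes>\<^sub>M \<nu>) borel snd = distr (\<mu> \<Otimes>\<^sub>M \<nu>) \<nu> snd"
    using sn by (intro distr_cong) auto
  also have "\<dots> = \<nu>"
  proof (rule measure_eqI)
    fix A assume A: "A \<in> sets (distr (\<mu> \<Otimes>\<^sub>M \<nu>) \<nu> snd)"
    then have A': "A \<in> sets \<nu>" by simp
    have "emeasure (distr (\<mu> \<Otimes>\<^sub>M \<nu>) \<nu> snd) A = emeasure (\<mu> \<Otimes>\<^sub>M \<nu>) (space \<mu> \<times> A)"
      using A' by (auto simp: emeasure_distr space_pair_measure dest: sets.sets_into_space intro!: arg_cong2[where f=emeasure])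
    also have "\<dots> = emeasure \<mu> (space \<mu>) * emeasure \<nu> A"
      using A' by (simp add: N.emeasure_pair_measure_Times)
    finally show "emeasure (distr (\<mu> \<Otimes>\<^sub>M \<nu>) \<nu> snd) A = emeasure \<nu> A" by (simp add: M.emeasure_space_1)
  qed simp
  finally have d2: "distr (\<mu> \<Otimes>\<^sub>M \<nu>) borel snd = \<nu>" .
  show ?thesis unfolding couplings_def using s d1 d2 MN.prob_space_axioms by auto
qed



lemma W_le:
  assumes "\<pi> \<in> couplings \<mu> \<nu>" "(\<integral>\<^sup>+ z. ennreal (dist (fst z) (snd z) powr p) \<partial>\<pi>) < ennreal (e powr p)" "0 < e" "0 < p"
  shows "wasserstein p \<mu> \<nu> < e"
proof -
  define I where "I = (INF \<pi>\<in>couplings \<mu> \<nu>. \<integral>\<^sup>+ z. ennreal (dist (fst z) (snd z) powr p) \<partial>\<pi>)"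
  have "I \<le> (\<integral>\<^sup>+ z. ennreal (dist (fst z) (snd z) powr p) \<partial>\<pi>)" unfolding I_def using assms(1) by (rule INF_lower)
  then have Il: "I < ennreal (e powr p)" using assms(2) by auto
  then have "I \<noteq> \<infinity>" by auto
  then obtain t where t: "I = ennreal t" "0 \<le> t" by (cases I) auto
  have tl: "t < e powr p" using Il t by (simp add: ennreal_less_iff)
  have "t powr (1/p) < e"
  proof (cases "t = 0")
    case True then show ?thesis using assms by simp
  next
    case False
    then have "t powr (1/p) < (e powr p) powr (1/p)" using t tl assms by (intro powr_less_mono2) auto
    also have "\<dots> = e" using assms by (simp add: powr_powr)
    finally show ?thesis .
  qed
  then show ?thesis unfolding wasserstein_def I_def[symmetric] using t by simp
qed

lemma W_lt:
  assumes P: "proper_space TYPE('a::metric_space)" and "\<mu> \<in> Pp p (x0::'a)" "\<nu> \<in> Pp p x0" "0 < p"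
    and W: "wasserstein p \<mu> \<nu> < d"
  shows "\<exists>\<pi>\<in>couplings \<mu> \<nu>. (\<integral>\<^sup>+ z. ennreal (dist (fst z) (snd z) powr p) \<partial>\<pi>) < ennreal (d powr p)"
proof -
  define I where "I = (INF \<pi>\<in>couplings \<mu> \<nu>. \<integral>\<^sup>+ z. ennreal (dist (fst z) (snd z) powr p) \<partial>\<pi>)"
  have c: "\<mu> \<Otimes>\<^sub>M \<nu> \<in> couplings \<mu> \<nu>" by (rule coupling_exists[OF assms(1-3)])
  have "I \<le> (\<integral>\<^sup>+ z. ennreal (dist (fst z) (snd z) powr p) \<partial>(\<mu> \<Otimes>\<^sub>M \<nu>))" unfolding I_def using c by (rule INF_lower)
  also have "\<dots> < \<infinity>" by (rule coupling_cost_finite[OF assms(2,3) c assms(4)])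
  finally have "I \<noteq> \<infinity>" by auto
  then obtain t where t: "I = ennreal t" "0 \<le> t" by (cases I) auto
  have W': "t powr (1/p) < d" using W unfolding wasserstein_def I_def[symmetric] using t by simp
  have "t < d powr p"
  proof (cases "t = 0")
    case True
    then have "0 < d" using W' by simp
    then show ?thesis using True by simp
  next
    case False
    have "t = (t powr (1/p)) powr p" using assms(4) t by (simp add: powr_powr)
    also have "\<dots> < d powr p" using W' False t assms(4) by (intro powr_less_mono2) auto
    finally show ?thesis .
  qed
  then have "I < ennreal (d powr p)" using t by (simp add: ennreal_less_iff)
  then show ?thesis unfolding I_def by (simp add: INF_less_iff)
qed



lemma push_coupling:
  fixes f :: "'a::metric_space \<Rightarrow> 'a"
  assumes f: "continuous_on UNIV f" and pi: "\<pi> \<in> couplings \<mu> \<nu>"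
  shows "distr \<pi> borel (\<lambda>z. (f (fst z), f (snd z))) \<in> couplings (distr \<mu> borel f) (distr \<nu> borel f)"
proof -
  have s: "sets \<pi> = sets borel" and pr: "prob_space \<pi>" and d1: "distr \<pi> borel fst = \<mu>" and d2: "distr \<pi> borel snd = \<nu>"
    using pi unfolding couplings_def by auto
  have fm: "f \<in> borel_measurable borel" using f by (rule borel_measurable_continuous_onI)
  have hm: "(\<lambda>z. (f (fst z), f (snd z))) \<in> measurable \<pi> borel"
    unfolding measurable_cong_sets[OF s refl]
    by (intro borel_measurable_continuous_onI continuous_intros continuous_on_compose2[OF f]) auto
  have fst_b: "(fst::'a\<times>'a\<Rightarrow>'a) \<in> borel_measurable borel" by (intro borel_measurable_continuous_onI continuous_intros)
  have snd_b: "(snd::'a\<times>'a\<Rightarrow>'a) \<in> borel_measurable borel" by (intro borel_measurable_continuous_onI continuous_intros)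
  have fstm: "fst \<in> measurable \<pi> borel"
    unfolding measurable_cong_sets[OF s refl] by (intro borel_measurable_continuous_onI continuous_intros)
  have sndm: "snd \<in> measurable \<pi> borel"
    unfolding measurable_cong_sets[OF s refl] by (intro borel_measurable_continuous_onI continuous_intros)
  have "distr (distr \<pi> borel (\<lambda>z. (f (fst z), f (snd z)))) borel fst = distr \<pi> borel (fst \<circ> (\<lambda>z. (f (fst z), f (snd z))))"
    by (rule distr_distr[OF fst_b hm])
  also have "\<dots> = distr \<pi> borel (f \<circ> fst)" by (simp add: comp_def)
  also have "\<dots> = distr (distr \<pi> borel fst) borel f" using fstm fm by (intro distr_distr[symmetric])
  finally have e1: "distr (distr \<pi> borel (\<lambda>z. (f (fst z), f (snd z)))) borel fst = distr \<mu> borel f" using d1 by simp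
  have "distr (distr \<pi> borel (\<lambda>z. (f (fst z), f (snd z)))) borel snd = distr \<pi> borel (snd \<circ> (\<lambda>z. (f (fst z), f (snd z))))"
    by (rule distr_distr[OF snd_b hm])
  also have "\<dots> = distr \<pi> borel (f \<circ> snd)" by (simp add: comp_def)
  also have "\<dots> = distr (distr \<pi> borel snd) borel f" using sndm fm by (intro distr_distr[symmetric])
  finally have e2: "distr (distr \<pi> borel (\<lambda>z. (f (fst z), f (snd z)))) borel snd = distr \<nu> borel f" using d2 by simp
  have "prob_space (distr \<pi> borel (\<lambda>z. (f (fst z), f (snd z))))"
    using pr hm by (intro prob_space.prob_space_distr) auto
  then show ?thesis unfolding couplings_def using e1 e2 by auto
qed

lemma push_cost:
  fixes f :: "'a::metric_space \<Rightarrow> 'a"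
  assumes f: "continuous_on UNIV f" and pi: "\<pi> \<in> couplings \<mu> \<nu>"
  shows "(\<integral>\<^sup>+ z. ennreal (dist (fst z) (snd z) powr p) \<partial>distr \<pi> borel (\<lambda>z. (f (fst z), f (snd z))))
       = (\<integral>\<^sup>+ z. ennreal (dist (f (fst z)) (f (snd z)) powr p) \<partial>\<pi>)"
proof -
  have s: "sets \<pi> = sets borel" using pi unfolding couplings_def by auto
  have hm: "(\<lambda>z. (f (fst z), f (snd z))) \<in> measurable \<pi> borel"
    unfolding measurable_cong_sets[OF s refl]
    by (intro borel_measurable_continuous_onI continuous_intros continuous_on_compose2[OF f]) auto
  have [measurable]: "(\<lambda>z::'a\<times>'a. dist (fst z) (snd z)) \<in> borel_measurable borel"
    by (intro borel_measurable_continuous_onI continuous_intros)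
  have gm: "(\<lambda>z::'a\<times>'a. ennreal (dist (fst z) (snd z) powr p)) \<in> borel_measurable borel" by measurable
  have gm': "(\<lambda>z::'a\<times>'a. ennreal (dist (fst z) (snd z) powr p)) \<in> borel_measurable (distr \<pi> borel (\<lambda>z. (f (fst z), f (snd z))))"
    using gm by simp
  show ?thesis by (subst nn_integral_distr[OF hm gm']) auto
qed

lemma growth_Pp:
  fixes f :: "'a::metric_space \<Rightarrow> 'a"
  assumes f: "continuous_on UNIV f" and C: "\<And>x. dist (f x) x0 \<le> C * (1 + dist x x0)" "0 \<le> C"
    and p: "0 < p" and mu: "\<mu> \<in> Pp p x0"
  shows "distr \<mu> borel f \<in> Pp p x0"
proof -
  have s: "sets \<mu> = sets borel" and pr: "prob_space \<mu>" and fin: "(\<integral>\<^sup>+ x. ennreal (dist x x0 powr p) \<partial>\<mu>) < \<infinity>"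
    using mu unfolding Pp_def by auto
  interpret prob_space \<mu> by fact
  have fm: "f \<in> measurable \<mu> borel" unfolding measurable_cong_sets[OF s refl] using f by (rule borel_measurable_continuous_onI)
  have [measurable]: "(\<lambda>x. dist x x0) \<in> borel_measurable borel"
    by (intro borel_measurable_continuous_onI continuous_intros)
  have dm: "(\<lambda>x. ennreal (dist x x0 powr p)) \<in> borel_measurable \<mu>"
    unfolding measurable_cong_sets[OF s refl] by measurable
  have "(\<integral>\<^sup>+ y. ennreal (dist y x0 powr p) \<partial>distr \<mu> borel f) = (\<integral>\<^sup>+ x. ennreal (dist (f x) x0 powr p) \<partial>\<mu>)"
    using fm by (subst nn_integral_distr) auto
  also have "\<dots> \<le> (\<integral>\<^sup>+ x. ennreal (C powr p * 2 powr p) * (1 + ennreal (dist x x0 powr p)) \<partial>\<mu>)"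
  proof (intro nn_integral_mono)
    fix x
    have "dist (f x) x0 powr p \<le> (C * (1 + dist x x0)) powr p" using C p by (intro powr_mono2) auto
    also have "\<dots> = C powr p * (1 + dist x x0) powr p" using C by (simp add: powr_mult)
    also have "(1 + dist x x0) powr p \<le> 2 powr p * (1 powr p + dist x x0 powr p)" using p by (intro powr_add_le2) auto
    then have "C powr p * (1 + dist x x0) powr p \<le> C powr p * (2 powr p * (1 + dist x x0 powr p))"
      by (intro mult_left_mono) auto
    finally have "dist (f x) x0 powr p \<le> C powr p * 2 powr p * (1 + dist x x0 powr p)" by (simp add: mult.assoc)
    then have "ennreal (dist (f x) x0 powr p) \<le> ennreal (C powr p * 2 powr p * (1 + dist x x0 powr p))"
      by (rule ennreal_leI)
    also have "\<dots> = ennreal (C powr p * 2 powr p) * ennreal (1 + dist x x0 powr p)" by (rule ennreal_mult) auto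
    also have "ennreal (1 + dist x x0 powr p) = 1 + ennreal (dist x x0 powr p)" by (subst ennreal_plus) auto
    finally show "ennreal (dist (f x) x0 powr p) \<le> ennreal (C powr p * 2 powr p) * (1 + ennreal (dist x x0 powr p))" .
  qed
  also have "\<dots> = ennreal (C powr p * 2 powr p) * (emeasure \<mu> (space \<mu>) + (\<integral>\<^sup>+ x. ennreal (dist x x0 powr p) \<partial>\<mu>))"
    using dm by (simp add: nn_integral_cmult nn_integral_add)
  also have "\<dots> < \<infinity>" using fin by (simp add: emeasure_space_1 ennreal_mult_less_top)
  finally have "(\<integral>\<^sup>+ y. ennreal (dist y x0 powr p) \<partial>distr \<mu> borel f) < \<infinity>" .
  moreover have "prob_space (distr \<mu> borel f)" using fm by (rule prob_space_distr)
  ultimately show ?thesis unfolding Pp_def by auto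
qed



lemma tail_small:
  fixes h :: "'a::metric_space \<Rightarrow> real"
  assumes s: "sets \<mu> = sets borel" and hm: "h \<in> borel_measurable borel" and h0: "\<And>x. 0 \<le> h x"
    and fin: "(\<integral>\<^sup>+ x. ennreal (h x) \<partial>\<mu>) < \<infinity>" and c: "0 < c"
  shows "\<exists>n::nat. (\<integral>\<^sup>+ x. ennreal (h x * indicator {x. real n < dist x x0} x) \<partial>\<mu>) < c"
proof -
  define F where "F = (\<lambda>(i::nat) x. ennreal (h x * indicator {x. real i < dist x x0} x))"
  have [measurable]: "(\<lambda>x. dist x x0) \<in> borel_measurable borel"
    by (intro borel_measurable_continuous_onI continuous_intros)
  have Fm: "F i \<in> borel_measurable \<mu>" for i
    unfolding F_def measurable_cong_sets[OF s refl] using hm by measurable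
  have dec: "AE x in \<mu>. F (Suc i) x \<le> F i x" for i
    unfolding F_def using h0 by (intro AE_I2 ennreal_leI mult_left_mono) (auto simp: indicator_def)
  have F0: "(\<integral>\<^sup>+ x. F 0 x \<partial>\<mu>) < \<infinity>"
    using fin unfolding F_def
    by (rule le_less_trans[rotated]) (intro nn_integral_mono ennreal_leI, use h0 in \<open>auto simp: indicator_def\<close>)
  have lim0: "(INF i. F i x) = 0" for x
  proof -
    obtain i :: nat where "dist x x0 < real i" using reals_Archimedean2 by blast
    then have "F i x = 0" unfolding F_def by auto
    then have "(INF i. F i x) \<le> 0" by (metis INF_lower UNIV_I)
    then show ?thesis by simp
  qed
  have "(INF i. integral\<^sup>N \<mu> (F i)) = (\<integral>\<^sup>+ x. (INF i. F i x) \<partial>\<mu>)"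
    by (rule nn_integral_monotone_convergence_INF_AE'[symmetric, OF dec Fm F0])
  also have "\<dots> = 0" by (simp add: lim0)
  finally have "(INF i. integral\<^sup>N \<mu> (F i)) < c" using c by simp
  then show ?thesis unfolding INF_less_iff F_def by auto
qed



lemma key_ineq:
  fixes a C p r R dx t :: real
  assumes C: "0 \<le> C" and p: "0 < p" and r: "0 < r" and R: "0 \<le> R"
    and a: "a \<le> C * (2 * (1 + dx) + t)" "0 \<le> a" and dx: "0 \<le> dx" and t: "0 \<le> t"
    and nc: "\<not> (dx \<le> R \<and> t < r)"
  shows "a powr p \<le> (4 powr p * C powr p) * (1 + dx) powr p * (if R < dx then 1 else 0)
                     + ((4 powr p * C powr p) * (1 + R) powr p / r powr p + 4 powr p * C powr p) * t powr p"
proof -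
  define K where "K = 4 powr p * C powr p"
  have K0: "0 \<le> K" unfolding K_def by simp
  have "a powr p \<le> (C * (2 * (1 + dx) + t)) powr p" using a p by (intro powr_mono2) auto
  also have "\<dots> = C powr p * (2 * (1 + dx) + t) powr p" using C dx t by (simp add: powr_mult)
  also have "(2 * (1 + dx) + t) powr p \<le> 2 powr p * ((2 * (1 + dx)) powr p + t powr p)"
    using p dx t by (intro powr_add_le2) auto
  also have "(2 * (1 + dx)) powr p = 2 powr p * (1 + dx) powr p" using dx by (subst powr_mult) auto
  finally have "a powr p \<le> C powr p * (2 powr p * (2 powr p * (1 + dx) powr p + t powr p))"
    by (simp add: mult_left_mono)
  also have "\<dots> = (2 powr p * 2 powr p * C powr p) * (1 + dx) powr p + (2 powr p * C powr p) * t powr p"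
    by (simp add: algebra_simps)
  also have "2 powr p * 2 powr p = 4 powr p" by (simp add: powr_mult[symmetric])
  also have "2 powr p * C powr p \<le> K" unfolding K_def
    using p by (intro mult_right_mono powr_mono2) auto
  then have "(2 powr p * C powr p) * t powr p \<le> K * t powr p" by (intro mult_right_mono) auto
  finally have main: "a powr p \<le> K * (1 + dx) powr p + K * t powr p" unfolding K_def by simp
  have "K * (1 + dx) powr p \<le> K * (1 + dx) powr p * (if R < dx then 1 else 0) + K * (1 + R) powr p / r powr p * t powr p"
  proof (cases "R < dx")
    case True then show ?thesis using K0 t by simp
  next
    case False
    then have tr: "r \<le> t" using nc by auto
    have "K * (1 + dx) powr p \<le> K * (1 + R) powr p" using False K0 dx p by (intro mult_left_mono powr_mono2) auto
    also have "\<dots> \<le> K * (1 + R) powr p * (t powr p / r powr p)"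
    proof -
      have "1 \<le> t powr p / r powr p" using tr r p by (simp add: powr_mono2)
      moreover have "0 \<le> K * (1 + R) powr p" using K0 by simp
      ultimately show ?thesis by (metis mult_left_mono mult.right_neutral)
    qed
    finally show ?thesis using False by simp
  qed
  with main show ?thesis unfolding K_def by (simp add: algebra_simps)
qed



lemma push_continuous:
  fixes f :: "'a::metric_space \<Rightarrow> 'a"
  assumes P: "proper_space TYPE('a)" and f: "continuous_on UNIV f"
    and C: "\<And>x. dist (f x) x0 \<le> C * (1 + dist x x0)" and C0: "0 \<le> C"
    and p: "1 \<le> p" and mu: "\<mu> \<in> Pp p x0" and e: "0 < e"
  shows "\<exists>d>0. \<forall>\<nu>\<in>Pp p x0. wasserstein p \<mu> \<nu> < d \<longrightarrow> wasserstein p (distr \<mu> borel f) (distr \<nu> borel f) < e"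
proof -
  have p0: "0 < p" using p by simp
  have s: "sets \<mu> = sets borel" and pr: "prob_space \<mu>" and fin: "(\<integral>\<^sup>+ x. ennreal (dist x x0 powr p) \<partial>\<mu>) < \<infinity>"
    using mu unfolding Pp_def by auto
  interpret M: prob_space \<mu> by fact
  have [measurable]: "(\<lambda>x. dist x x0) \<in> borel_measurable borel"
    by (intro borel_measurable_continuous_onI continuous_intros)
  define \<eta> where "\<eta> = e powr p"
  have \<eta>0: "0 < \<eta>" unfolding \<eta>_def using e by simp
  define \<epsilon> where "\<epsilon> = (\<eta>/3) powr (1/p)"
  have \<epsilon>0: "0 < \<epsilon>" unfolding \<epsilon>_def using \<eta>0 by simp
  have \<epsilon>p: "\<epsilon> powr p = \<eta>/3" unfolding \<epsilon>_def using \<eta>0 p0 by (simp add: powr_powr)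
  define K where "K = 4 powr p * C powr p"
  have K0: "0 \<le> K" unfolding K_def by simp
  define h where "h = (\<lambda>x. K * (1 + dist x x0) powr p)"
  have hm: "h \<in> borel_measurable borel" unfolding h_def by measurable
  have h0: "\<And>x. 0 \<le> h x" unfolding h_def using K0 by simp
  have dm: "(\<lambda>x. ennreal (dist x x0 powr p)) \<in> borel_measurable \<mu>"
    unfolding measurable_cong_sets[OF s refl] by measurable
  have hfin: "(\<integral>\<^sup>+ x. ennreal (h x) \<partial>\<mu>) < \<infinity>"
  proof -
    have "(\<integral>\<^sup>+ x. ennreal (h x) \<partial>\<mu>) \<le> (\<integral>\<^sup>+ x. ennreal (K * 2 powr p) * (1 + ennreal (dist x x0 powr p)) \<partial>\<mu>)"
    proof (intro nn_integral_mono)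
      fix x
      have "(1 + dist x x0) powr p \<le> 2 powr p * (1 powr p + dist x x0 powr p)" using p0 by (intro powr_add_le2) auto
      then have "h x \<le> K * 2 powr p * (1 + dist x x0 powr p)" unfolding h_def using K0
        by (simp add: mult.assoc mult_left_mono)
      then have "ennreal (h x) \<le> ennreal (K * 2 powr p * (1 + dist x x0 powr p))" by (rule ennreal_leI)
      also have "\<dots> = ennreal (K * 2 powr p) * ennreal (1 + dist x x0 powr p)" using K0 by (intro ennreal_mult) auto
      also have "ennreal (1 + dist x x0 powr p) = 1 + ennreal (dist x x0 powr p)" by (subst ennreal_plus) auto
      finally show "ennreal (h x) \<le> ennreal (K * 2 powr p) * (1 + ennreal (dist x x0 powr p))" .
    qed
    also have "\<dots> = ennreal (K * 2 powr p) * (emeasure \<mu> (space \<mu>) + (\<integral>\<^sup>+ x. ennreal (dist x x0 powr p) \<partial>\<mu>))"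
      using dm by (simp add: nn_integral_cmult nn_integral_add)
    also have "\<dots> < \<infinity>" using fin by (simp add: M.emeasure_space_1 ennreal_mult_less_top)
    finally show ?thesis .
  qed
  have "0 < \<eta>/3" using \<eta>0 by simp
  from tail_small[OF s hm h0 hfin, of "ennreal (\<eta>/3)" x0] \<eta>0
  obtain n :: nat where n: "(\<integral>\<^sup>+ x. ennreal (h x * indicator {x. real n < dist x x0} x) \<partial>\<mu>) < ennreal (\<eta>/3)"
    by auto
  define R where "R = real n"
  have R0: "0 \<le> R" unfolding R_def by simp
  have "compact (cball x0 (R+1))" by (rule proper_compact_cball[OF P])
  then have "uniformly_continuous_on (cball x0 (R+1)) f"
    using f by (intro compact_uniformly_continuous) (auto intro: continuous_on_subset)
  then obtain r0 where r0: "r0 > 0" "\<And>x x'. x \<in> cball x0 (R+1) \<Longrightarrow> x' \<in> cball x0 (R+1) \<Longrightarrow> dist x' x < r0 \<Longrightarrow> dist (f x') (f x) < \<epsilon>"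
    unfolding uniformly_continuous_on_def using \<epsilon>0 by metis
  define r where "r = min r0 1"
  have r: "0 < r" "r \<le> r0" "r \<le> 1" unfolding r_def using r0 by auto
  define K2 where "K2 = K * (1 + R) powr p / r powr p + K"
  have K20: "0 \<le> K2" unfolding K2_def using K0 r by simp
  define \<delta> where "\<delta> = (\<eta> / (3 * (K2 + 1))) powr (1/p)"
  have \<delta>0: "0 < \<delta>" unfolding \<delta>_def using \<eta>0 K20 by simp
  have \<delta>p: "\<delta> powr p = \<eta> / (3 * (K2 + 1))" unfolding \<delta>_def using \<eta>0 K20 p0 by (simp add: powr_powr)
  have K2\<delta>: "K2 * \<delta> powr p < \<eta>/3"
  proof -
    have "K2 * \<delta> powr p = (\<eta>/3) * (K2 / (K2 + 1))" unfolding \<delta>p using K20 by (simp add: field_simps)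
    also have "\<dots> < (\<eta>/3) * 1" using K20 \<eta>0 by (intro mult_strict_left_mono) auto
    finally show ?thesis by simp
  qed
  define T where "T = (\<lambda>x. h x * indicator {x. real n < dist x x0} x)"
  have T0: "\<And>x. 0 \<le> T x" unfolding T_def using h0 by simp
  have Tm: "T \<in> borel_measurable borel" unfolding T_def using hm by measurable
  have pw: "dist (f x) (f y) powr p \<le> \<epsilon> powr p + T x + K2 * dist x y powr p" for x y
  proof (cases "dist x x0 \<le> R \<and> dist x y < r")
    case True
    have xin: "x \<in> cball x0 (R+1)" using True by (simp add: dist_commute)
    have "dist x0 y \<le> dist x0 x + dist x y" by (rule dist_triangle)
    then have yin: "y \<in> cball x0 (R+1)" using True r by (simp add: dist_commute)
    have "dist (f y) (f x) < \<epsilon>" using r0(2)[OF xin yin] True r by (simp add: dist_commute)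
    then have "dist (f x) (f y) powr p \<le> \<epsilon> powr p" using p0 by (intro powr_mono2) (auto simp: dist_commute)
    moreover have "0 \<le> T x + K2 * dist x y powr p" using T0 K20 by simp
    ultimately show ?thesis by simp
  next
    case False
    have a: "dist (f x) (f y) \<le> C * (2 * (1 + dist x x0) + dist x y)"
    proof -
      have "dist (f x) (f y) \<le> dist (f x) x0 + dist (f y) x0" using dist_triangle3[of "f x" "f y" x0] by (simp add: dist_commute)
      also have "\<dots> \<le> C * (1 + dist x x0) + C * (1 + dist y x0)" using C by (intro add_mono)
      also have "dist y x0 \<le> dist x x0 + dist x y" using dist_triangle3[of y x0 x] by (simp add: dist_commute)
      then have "C * (1 + dist y x0) \<le> C * (1 + dist x x0 + dist x y)" using C0 by (intro mult_left_mono) auto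
      finally show ?thesis by (simp add: algebra_simps)
    qed
    have "dist (f x) (f y) powr p \<le> K * (1 + dist x x0) powr p * (if R < dist x x0 then 1 else 0) + K2 * dist x y powr p"
      unfolding K_def K2_def using key_ineq[OF C0 p0 r(1) R0 a _ _ _ False] by simp
    also have "K * (1 + dist x x0) powr p * (if R < dist x x0 then 1 else 0) = T x"
      unfolding T_def h_def R_def by (simp add: indicator_def)
    moreover have "0 \<le> \<epsilon> powr p" by simp
    ultimately show ?thesis by linarith
  qed
  show ?thesis
  proof (intro exI[of _ \<delta>] conjI ballI impI)
    show "0 < \<delta>" by fact
    fix \<nu> assume nu: "\<nu> \<in> Pp p x0" and W: "wasserstein p \<mu> \<nu> < \<delta>"
    obtain \<pi> where pi: "\<pi> \<in> couplings \<mu> \<nu>"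
      and cost: "(\<integral>\<^sup>+ z. ennreal (dist (fst z) (snd z) powr p) \<partial>\<pi>) < ennreal (\<delta> powr p)"
      using W_lt[OF P mu nu p0 W] by blast
    have spi: "sets \<pi> = sets borel" and ppi: "prob_space \<pi>" using pi unfolding couplings_def by auto
    interpret PI: prob_space \<pi> by fact
    have [measurable]: "(\<lambda>z::'a\<times>'a. dist (fst z) (snd z)) \<in> borel_measurable borel"
      by (intro borel_measurable_continuous_onI continuous_intros)
    have dpm: "(\<lambda>z. ennreal (dist (fst z) (snd z) powr p)) \<in> borel_measurable \<pi>"
      unfolding measurable_cong_sets[OF spi refl] by measurable
    have [measurable]: "(\<lambda>z::'a\<times>'a. T (fst z)) \<in> borel_measurable borel"
      by (intro measurable_compose[OF _ Tm] borel_measurable_continuous_onI continuous_intros)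
    have Tfm: "(\<lambda>z. ennreal (T (fst z))) \<in> borel_measurable \<pi>"
      unfolding measurable_cong_sets[OF spi refl] by measurable
    define A where "A = (\<integral>\<^sup>+ x. ennreal (T x) \<partial>\<mu>)"
    have A: "A < ennreal (\<eta>/3)" unfolding A_def T_def using n .
    define B where "B = (\<integral>\<^sup>+ z. ennreal (dist (fst z) (snd z) powr p) \<partial>\<pi>)"
    have "(\<integral>\<^sup>+ z. ennreal (dist (fst z) (snd z) powr p) \<partial>distr \<pi> borel (\<lambda>z. (f (fst z), f (snd z))))
       = (\<integral>\<^sup>+ z. ennreal (dist (f (fst z)) (f (snd z)) powr p) \<partial>\<pi>)"
      by (rule push_cost[OF f pi])
    also have "\<dots> \<le> (\<integral>\<^sup>+ z. ennreal (\<epsilon> powr p) + ennreal (T (fst z)) + ennreal K2 * ennreal (dist (fst z) (snd z) powr p) \<partial>\<pi>)"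
    proof (intro nn_integral_mono)
      fix z :: "'a \<times> 'a"
      have "ennreal (dist (f (fst z)) (f (snd z)) powr p) \<le> ennreal (\<epsilon> powr p + T (fst z) + K2 * dist (fst z) (snd z) powr p)"
        using pw by (rule ennreal_leI)
      also have "\<dots> = ennreal (\<epsilon> powr p) + ennreal (T (fst z)) + ennreal K2 * ennreal (dist (fst z) (snd z) powr p)"
        using T0 K20 by (simp add: ennreal_mult)
      finally show "ennreal (dist (f (fst z)) (f (snd z)) powr p) \<le> ennreal (\<epsilon> powr p) + ennreal (T (fst z)) + ennreal K2 * ennreal (dist (fst z) (snd z) powr p)" .
    qed
    also have "\<dots> = ennreal (\<epsilon> powr p) + A + ennreal K2 * B"
    proof -
      have "(\<integral>\<^sup>+ z. ennreal (\<epsilon> powr p) + ennreal (T (fst z)) + ennreal K2 * ennreal (dist (fst z) (snd z) powr p) \<partial>\<pi>)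
          = (\<integral>\<^sup>+ z. ennreal (\<epsilon> powr p) + ennreal (T (fst z)) \<partial>\<pi>) + (\<integral>\<^sup>+ z. ennreal K2 * ennreal (dist (fst z) (snd z) powr p) \<partial>\<pi>)"
        using Tfm dpm by (intro nn_integral_add) auto
      also have "(\<integral>\<^sup>+ z. ennreal (\<epsilon> powr p) + ennreal (T (fst z)) \<partial>\<pi>) = (\<integral>\<^sup>+ z. ennreal (\<epsilon> powr p) \<partial>\<pi>) + (\<integral>\<^sup>+ z. ennreal (T (fst z)) \<partial>\<pi>)"
        using Tfm by (intro nn_integral_add) auto
      also have "(\<integral>\<^sup>+ z. ennreal (\<epsilon> powr p) \<partial>\<pi>) = ennreal (\<epsilon> powr p)" by (simp add: PI.emeasure_space_1)
      also have "(\<integral>\<^sup>+ z. ennreal (T (fst z)) \<partial>\<pi>) = A" unfolding A_def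
        using Tm by (intro coupling_fst[OF pi]) measurable
      also have "(\<integral>\<^sup>+ z. ennreal K2 * ennreal (dist (fst z) (snd z) powr p) \<partial>\<pi>) = ennreal K2 * B"
        unfolding B_def using dpm by (rule nn_integral_cmult)
      finally show ?thesis .
    qed
    also have "\<dots> < ennreal \<eta>"
    proof -
      obtain a where a: "A = ennreal a" "0 \<le> a" using A by (cases A) auto
      have a3: "a < \<eta>/3" using A a by (simp add: ennreal_less_iff)
      obtain b where b: "B = ennreal b" "0 \<le> b" using cost unfolding B_def[symmetric] by (cases B) auto
      have b3: "b < \<delta> powr p" using cost b unfolding B_def[symmetric] by (simp add: ennreal_less_iff)
      have "K2 * b \<le> K2 * \<delta> powr p" using b3 K20 by (intro mult_left_mono) auto
      then have "\<eta>/3 + a + K2 * b < \<eta>" using a3 K2\<delta> by simp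
      moreover have "ennreal (\<epsilon> powr p) + A + ennreal K2 * B = ennreal (\<eta>/3 + a + K2 * b)"
        using a b K20 \<eta>0 by (simp add: \<epsilon>p ennreal_mult)
      ultimately show ?thesis using \<eta>0 by (metis ennreal_lessI)
    qed
    finally have "(\<integral>\<^sup>+ z. ennreal (dist (fst z) (snd z) powr p) \<partial>distr \<pi> borel (\<lambda>z. (f (fst z), f (snd z)))) < ennreal (e powr p)"
      unfolding \<eta>_def .
    then show "wasserstein p (distr \<mu> borel f) (distr \<nu> borel f) < e"
      by (intro W_le[OF push_coupling[OF f pi] _ e p0])
  qed
qed



lemma unbounded_bad:
  fixes f :: "'a::metric_space \<Rightarrow> 'a"
  assumes f: "continuous_on UNIV f" and p: "1 \<le> p"
    and nb: "\<not> bdd_above (range (\<lambda>x. dist (f x) x0 / (1 + dist x x0)))"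
  shows "\<exists>\<mu>\<in>Pp p x0. distr \<mu> borel f \<notin> Pp p x0"
proof -
  have p0: "0 < p" using p by simp
  have "\<forall>n::nat. \<exists>x. 2^n < dist (f x) x0 / (1 + dist x x0)"
    using nb unfolding bdd_above_def by (auto simp: not_le)
  then obtain xs where xs: "\<And>n. 2^n < dist (f (xs n)) x0 / (1 + dist (xs n) x0)" by metis
  define a where "a = (\<lambda>n. 1 + dist (xs n) x0)"
  define b where "b = (\<lambda>n. dist (f (xs n)) x0)"
  have a1: "1 \<le> a n" for n unfolding a_def by simp
  have ab: "2^n * a n < b n" for n using xs[of n] a1[of n] unfolding a_def b_def by (simp add: field_simps)
  define c where "c = (\<lambda>n. (1/2)^Suc n / a n powr p)"
  have c0: "0 < c n" for n unfolding c_def using a1[of n] by simp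
  have cle: "c n \<le> (1/2)^Suc n" for n
  proof -
    have "1 \<le> a n powr p" using a1[of n] p0 by (simp add: ge_one_powr_ge_zero)
    then show ?thesis unfolding c_def by (simp add: divide_le_eq_1 field_simps)
  qed
  define S where "S = (\<integral>\<^sup>+ n. ennreal (c n) \<partial>count_space UNIV)"
  have S1: "S \<le> 1"
  proof -
    have "S \<le> (\<integral>\<^sup>+ n. ennreal ((1/2)^Suc n) \<partial>count_space UNIV)"
      unfolding S_def by (intro nn_integral_mono ennreal_leI cle)
    also have "\<dots> = (\<Sum>n. ennreal ((1/2)^Suc n))" by (rule nn_integral_count_space_nat)
    also have "\<dots> = 1" by (subst suminf_ennreal_eq[OF _ power_half_series]) auto
    finally show ?thesis .
  qed
  have S0: "ennreal (c 0) \<le> S"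
  proof -
    have "ennreal (c 0) = sum (\<lambda>n. ennreal (c n)) {0}" by simp
    also have "\<dots> \<le> (\<Sum>n. ennreal (c n))" by (intro sum_le_suminf summableI) auto
    also have "\<dots> = S" unfolding S_def by (rule nn_integral_count_space_nat[symmetric])
    finally show ?thesis .
  qed
  obtain s where s: "S = ennreal s" "0 \<le> s" using S1 by (cases S) (auto simp: top_unique)
  have s0: "0 < s" using S0 s c0[of 0] by (auto simp: ennreal_le_iff2 intro: less_le_trans)
  have s1: "s \<le> 1" using S1 s by simp
  define w where "w = (\<lambda>n. c n / s)"
  have w0: "\<And>n. 0 \<le> w n" unfolding w_def using c0 s0 by (simp add: less_imp_le)
  have wsum: "(\<integral>\<^sup>+ n. ennreal (w n) \<partial>count_space UNIV) = 1"
  proof -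
    have "(\<integral>\<^sup>+ n. ennreal (w n) \<partial>count_space UNIV) = (\<integral>\<^sup>+ n. ennreal (c n) * ennreal (1/s) \<partial>count_space UNIV)"
      unfolding w_def using c0 s0 by (intro nn_integral_cong) (simp add: ennreal_mult[symmetric] less_imp_le)
    also have "\<dots> = S * ennreal (1/s)" unfolding S_def by (rule nn_integral_multc) auto
    also have "\<dots> = 1" using s s0 by (simp add: ennreal_mult[symmetric])
    finally show ?thesis .
  qed
  define q where "q = embed_pmf w"
  have pq: "pmf q n = w n" for n unfolding q_def by (rule pmf_embed_pmf[OF w0 wsum])
  define \<mu> where "\<mu> = distr (measure_pmf q) borel xs"
  have xsm: "xs \<in> measurable (measure_pmf q) borel" by simp
  have smu: "sets \<mu> = sets borel" unfolding \<mu>_def by simp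
  have fm: "f \<in> borel_measurable borel" using f by (rule borel_measurable_continuous_onI)
  have [measurable]: "(\<lambda>x. dist x x0) \<in> borel_measurable borel"
    by (intro borel_measurable_continuous_onI continuous_intros)
  have gm: "(\<lambda>x. ennreal (dist x x0 powr p)) \<in> borel_measurable borel" by measurable
  have mom: "(\<integral>\<^sup>+ y. g y \<partial>\<mu>) = (\<integral>\<^sup>+ n. ennreal (w n) * g (xs n) \<partial>count_space UNIV)"
    if "g \<in> borel_measurable borel" for g
  proof -
    have "(\<integral>\<^sup>+ y. g y \<partial>\<mu>) = (\<integral>\<^sup>+ n. g (xs n) \<partial>measure_pmf q)"
      unfolding \<mu>_def using that by (intro nn_integral_distr xsm) simp
    also have "\<dots> = (\<integral>\<^sup>+ n. ennreal (w n) * g (xs n) \<partial>count_space UNIV)"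
      by (simp add: nn_integral_measure_pmf pq)
    finally show ?thesis .
  qed
  have muPp: "\<mu> \<in> Pp p x0"
  proof -
    have "prob_space \<mu>" unfolding \<mu>_def using xsm by (intro prob_space.prob_space_distr) (auto intro: prob_space_measure_pmf)
    moreover have "(\<integral>\<^sup>+ y. ennreal (dist y x0 powr p) \<partial>\<mu>) < \<infinity>"
    proof -
      have "(\<integral>\<^sup>+ y. ennreal (dist y x0 powr p) \<partial>\<mu>) = (\<integral>\<^sup>+ n. ennreal (w n) * ennreal (dist (xs n) x0 powr p) \<partial>count_space UNIV)"
        by (rule mom[OF gm])
      also have "\<dots> \<le> (\<integral>\<^sup>+ n. ennreal ((1/2)^Suc n) * ennreal (1/s) \<partial>count_space UNIV)"
      proof (intro nn_integral_mono)
        fix n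
        have "dist (xs n) x0 powr p \<le> a n powr p" unfolding a_def using p0 by (intro powr_mono2) auto
        then have "w n * dist (xs n) x0 powr p \<le> w n * a n powr p" using w0 by (intro mult_left_mono) auto
        also have "w n * a n powr p = (1/2)^Suc n * (1/s)"
          unfolding w_def c_def using a1[of n] s0 by (simp add: field_simps)
        finally have "w n * dist (xs n) x0 powr p \<le> (1/2)^Suc n * (1/s)" .
        then show "ennreal (w n) * ennreal (dist (xs n) x0 powr p) \<le> ennreal ((1/2)^Suc n) * ennreal (1/s)"
          using w0 s0 by (simp add: ennreal_mult[symmetric] ennreal_leI)
      qed
      also have "\<dots> = (\<integral>\<^sup>+ n. ennreal ((1/2)^Suc n) \<partial>count_space UNIV) * ennreal (1/s)"
        by (rule nn_integral_multc) auto
      also have "(\<integral>\<^sup>+ n. ennreal ((1/2)^Suc n) \<partial>count_space UNIV) = 1"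
        by (subst nn_integral_count_space_nat) (subst suminf_ennreal_eq[OF _ power_half_series], auto)
      finally have "(\<integral>\<^sup>+ y. ennreal (dist y x0 powr p) \<partial>\<mu>) \<le> ennreal (1/s)" by simp
      then show ?thesis using ennreal_less_top[of "1/s"] unfolding infinity_ennreal_def by (rule le_less_trans)
    qed
    ultimately show ?thesis unfolding Pp_def using smu by auto
  qed
  have "distr \<mu> borel f \<notin> Pp p x0"
  proof
    assume "distr \<mu> borel f \<in> Pp p x0"
    then have fin: "(\<integral>\<^sup>+ y. ennreal (dist y x0 powr p) \<partial>distr \<mu> borel f) < \<infinity>" unfolding Pp_def by auto
    have fm': "f \<in> measurable \<mu> borel" unfolding measurable_cong_sets[OF smu refl] by (rule fm)
    have gfm: "(\<lambda>x. ennreal (dist (f x) x0 powr p)) \<in> borel_measurable borel"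
      by (intro measurable_compose[OF fm gm])
    have "(\<integral>\<^sup>+ y. ennreal (dist y x0 powr p) \<partial>distr \<mu> borel f) = (\<integral>\<^sup>+ x. ennreal (dist (f x) x0 powr p) \<partial>\<mu>)"
      using fm' gm by (intro nn_integral_distr) auto
    also have "\<dots> = (\<integral>\<^sup>+ n. ennreal (w n) * ennreal (dist (f (xs n)) x0 powr p) \<partial>count_space UNIV)"
      by (rule mom[OF gfm])
    finally have eq: "(\<integral>\<^sup>+ y. ennreal (dist y x0 powr p) \<partial>distr \<mu> borel f) = (\<integral>\<^sup>+ n. ennreal (w n) * ennreal (dist (f (xs n)) x0 powr p) \<partial>count_space UNIV)" .
    have low: "(\<integral>\<^sup>+ (n::nat). ennreal (1 / (2 * s)) \<partial>count_space UNIV) \<le> (\<integral>\<^sup>+ n. ennreal (w n) * ennreal (dist (f (xs n)) x0 powr p) \<partial>count_space UNIV)"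
    proof (rule nn_integral_mono)
      fix n
      have bp: "(2^n * a n) powr p \<le> b n powr p" using ab[of n] a1[of n] p0 by (intro powr_mono2) auto
      have "(2^n * a n) powr p = (2^n) powr p * a n powr p" using a1[of n] by (subst powr_mult) auto
      moreover have "(2::real)^n \<le> (2^n) powr p"
      proof -
        have "((2::real)^n) powr 1 \<le> (2^n) powr p" using p by (intro powr_mono) auto
        then show ?thesis by simp
      qed
      ultimately have "2^n * a n powr p \<le> b n powr p" using bp
        by (smt (verit) mult_right_mono powr_ge_zero)
      then have "w n * (2^n * a n powr p) \<le> w n * b n powr p" using w0 by (intro mult_left_mono) auto
      moreover have "w n * (2^n * a n powr p) = 1 / (2 * s)"
        unfolding w_def c_def using a1[of n] s0 by (simp add: field_simps power_Suc)
      ultimately have "1 / (2 * s) \<le> w n * dist (f (xs n)) x0 powr p" unfolding b_def by simp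
      then show "ennreal (1 / (2 * s)) \<le> ennreal (w n) * ennreal (dist (f (xs n)) x0 powr p)"
        using w0 by (simp add: ennreal_mult[symmetric] ennreal_leI)
    qed
    have "(\<integral>\<^sup>+ (n::nat). ennreal (1 / (2 * s)) \<partial>count_space UNIV) = \<infinity>"
      using s0 by (simp add: ennreal_mult_top)
    then show False using fin eq low by (simp add: top_unique)
  qed
  with muPp show ?thesis by blast
qed


theorem mainTheorem5:
  fixes f :: "'a::metric_space \<Rightarrow> 'a" and x0 :: 'a and p :: real
  assumes "proper_space TYPE('a)"
    and "continuous_on UNIV f"
    and "1 \<le> p"
  shows "((\<forall>\<mu>\<in>Pp p x0. distr \<mu> borel f \<in> Pp p x0) \<and>
          (\<forall>\<mu>\<in>Pp p x0. \<forall>e>0. \<exists>d>0. \<forall>\<nu>\<in>Pp p x0.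
              wasserstein p \<mu> \<nu> < d \<longrightarrow>
              wasserstein p (distr \<mu> borel f) (distr \<nu> borel f) < e))
     \<longleftrightarrow> bdd_above (range (\<lambda>x. dist (f x) x0 / (1 + dist x x0)))"
proof
  assume L: "(\<forall>\<mu>\<in>Pp p x0. distr \<mu> borel f \<in> Pp p x0) \<and>
          (\<forall>\<mu>\<in>Pp p x0. \<forall>e>0. \<exists>d>0. \<forall>\<nu>\<in>Pp p x0.
              wasserstein p \<mu> \<nu> < d \<longrightarrow>
              wasserstein p (distr \<mu> borel f) (distr \<nu> borel f) < e)"
  show "bdd_above (range (\<lambda>x. dist (f x) x0 / (1 + dist x x0)))"
  proof (rule ccontr)
    assume "\<not> bdd_above (range (\<lambda>x. dist (f x) x0 / (1 + dist x x0)))"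
    from unbounded_bad[OF assms(2,3) this] L show False by blast
  qed
next
  assume "bdd_above (range (\<lambda>x. dist (f x) x0 / (1 + dist x x0)))"
  then obtain M where M: "\<And>x. dist (f x) x0 / (1 + dist x x0) \<le> M" by (auto simp: bdd_above_def)
  define C where "C = max M 0"
  have C0: "0 \<le> C" unfolding C_def by simp
  have C: "dist (f x) x0 \<le> C * (1 + dist x x0)" for x
  proof -
    have "dist (f x) x0 / (1 + dist x x0) \<le> C" using M[of x] unfolding C_def by simp
    then show ?thesis by (simp add: divide_le_eq add_pos_nonneg mult.commute)
  qed
  have p0: "0 < p" using assms(3) by simp
  show "(\<forall>\<mu>\<in>Pp p x0. distr \<mu> borel f \<in> Pp p x0) \<and>
          (\<forall>\<mu>\<in>Pp p x0. \<forall>e>0. \<exists>d>0. \<forall>\<nu>\<in>Pp p x0.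
              wasserstein p \<mu> \<nu> < d \<longrightarrow>
              wasserstein p (distr \<mu> borel f) (distr \<nu> borel f) < e)"
    using growth_Pp[OF assms(2) C C0 p0] push_continuous[OF assms(1,2) C C0 assms(3)] by blast
qed

end
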